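(* $\mathcal{L}_{\mathsf{DSAFA}}\subsetneq\mathcal{L}_{\mathsf{SAFA}}$, where $\mathcal{L}_{\mathsf{DSAFA}}$ and $\mathcal{L}_{\mathsf{SAFA}}$ are the classes of data languages accepted by deterministic SAFA and by (nondeterministic) SAFA respectively.
   Context: $D$ is a fixed countably infinite set of data values; for a finite alphabet $\Sigma$, data languages are subsets of $(\Sigma\times D)^*$. A set augmented finite automaton (SAFA) is a tuple $M=(Q,\Sigma\times D,q_0,F,H,\delta)$: $Q$ finite set of states, $q_0\in Q$ initial, $F\subseteq Q$ final, $H=\{h_1,\dots,h_m\}$ a finite collection of (names of) sets of data values, $\delta\subseteq Q\times\Sigma\times C\times OP\times Q$ with $C=\{p(h_i),\,!p(h_i): h_i\in H\}$, $OP=\{-\}\cup\{\mathsf{ins}(h_i):h_i\in H\}$. Configurations are $(q,\langle S_1,\dots,S_m\rangle)$ with $S_i\subseteq D$ finite; initially state $q_0$ and all sets empty. On reading $(a,d)$, a transition $(q,a,\alpha,op,q')$ from the current state may be taken if $\alpha=p(h_i)$ and $d\in S_i$, or $\alpha=\,!p(h_i)$ and $d\notin S_i$; then the state becomes $q'$ and if $op=\mathsf{ins}(h_j)$ the value $d$ is added to $S_j$ ($op=-$ changes nothing). A word is accepted if some run reads it entirely and ends in $F$. A SAFA is deterministic (DSAFA) if for every $q\in Q$ and $a\in\Sigma$, all transitions from $q$ on $a$ test the same set $h_i$, with at most one transition having condition $p(h_i)$ and at most one having condition $!p(h_i)$. *)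

theory Defs
  imports Main "HOL-Library.Countable"
begin

text \<open>States, letters of the finite alphabet
  and names of the sets h_i are natural numbers; data values are of a type 'd
  (in the theorem: a countably infinite type).\<close>

datatype cond = P nat | NP nat
datatype oper = NoOp | Ins nat

record safa =
  states :: "nat set"
  alph   :: "nat set"
  init   :: nat
  final  :: "nat set"
  hsets  :: "nat set"
  delta  :: "(nat \<times> nat \<times> cond \<times> oper \<times> nat) set"

fun cond_set :: "cond \<Rightarrow> nat" where
  "cond_set (P i) = i" | "cond_set (NP i) = i"

fun oper_ok :: "nat set \<Rightarrow> oper \<Rightarrow> bool" where
  "oper_ok H NoOp = True" | "oper_ok H (Ins j) = (j \<in> H)"

definition wf_safa :: "safa \<Rightarrow> bool" where
  "wf_safa M \<longleftrightarrow> finite (states M) \<and> finite (alph M) \<and> init M \<in> states M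
     \<and> final M \<subseteq> states M \<and> finite (hsets M)
     \<and> (\<forall>(q,a,c,op,q') \<in> delta M. q \<in> states M \<and> a \<in> alph M \<and> cond_set c \<in> hsets M
            \<and> oper_ok (hsets M) op \<and> q' \<in> states M)"

fun sat :: "cond \<Rightarrow> 'd \<Rightarrow> (nat \<Rightarrow> 'd set) \<Rightarrow> bool" where
  "sat (P i) d S = (d \<in> S i)" | "sat (NP i) d S = (d \<notin> S i)"

fun apply_op :: "oper \<Rightarrow> 'd \<Rightarrow> (nat \<Rightarrow> 'd set) \<Rightarrow> (nat \<Rightarrow> 'd set)" where
  "apply_op NoOp d S = S" | "apply_op (Ins j) d S = S(j := insert d (S j))"

text \<open>Configurations: a state and the current contents of the sets h_i.\<close>
inductive run :: "safa \<Rightarrow> nat \<times> (nat \<Rightarrow> 'd set) \<Rightarrow> (nat \<times> 'd) list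
                    \<Rightarrow> nat \<times> (nat \<Rightarrow> 'd set) \<Rightarrow> bool" for M where
  run_nil: "run M c [] c"
| run_cons: "\<lbrakk> (q, a, \<alpha>, op, q') \<in> delta M; sat \<alpha> d S;
              run M (q', apply_op op d S) w c' \<rbrakk> \<Longrightarrow> run M (q, S) ((a, d) # w) c'"

definition lang :: "safa \<Rightarrow> (nat \<times> 'd) list set" where
  "lang M = {w. \<exists>q S. run M (init M, \<lambda>_. {}) w (q, S) \<and> q \<in> final M}"

definition deterministic :: "safa \<Rightarrow> bool" where
  "deterministic M \<longleftrightarrow> (\<forall>q \<in> states M. \<forall>a \<in> alph M. \<exists>i.
      (\<forall>c op q'. (q, a, c, op, q') \<in> delta M \<longrightarrow> cond_set c = i)
    \<and> (\<forall>op1 q1 op2 q2. (q, a, P i, op1, q1) \<in> delta M \<and> (q, a, P i, op2, q2) \<in> delta M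
          \<longrightarrow> op1 = op2 \<and> q1 = q2)
    \<and> (\<forall>op1 q1 op2 q2. (q, a, NP i, op1, q1) \<in> delta M \<and> (q, a, NP i, op2, q2) \<in> delta M
          \<longrightarrow> op1 = op2 \<and> q1 = q2))"

definition L_SAFA :: "(nat \<times> 'd) list set set" where
  "L_SAFA = {lang M | M. wf_safa M}"

definition L_DSAFA :: "(nat \<times> 'd) list set set" where
  "L_DSAFA = {lang M | M. wf_safa M \<and> deterministic M}"

end

theory Submission
  imports Defs
begin

lemma run_Nil_iff: "run M c [] c' \<longleftrightarrow> c' = c"
  by (auto intro: run.intros elim: run.cases)

lemma run_Cons_iff: "run M (q,S) ((a,d)#w) c' \<longleftrightarrow>
   (\<exists>\<alpha> op q'. (q,a,\<alpha>,op,q') \<in> delta M \<and> sat \<alpha> d S \<and> run M (q', apply_op op d S) w c')"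
proof
  assume "run M (q,S) ((a,d)#w) c'"
  then show "\<exists>\<alpha> op q'. (q,a,\<alpha>,op,q') \<in> delta M \<and> sat \<alpha> d S \<and> run M (q', apply_op op d S) w c'"
    by (cases rule: run.cases) auto
qed (auto intro: run.intros)

lemma run_append: "run M c (u@v) c' \<longleftrightarrow> (\<exists>c''. run M c u c'' \<and> run M c'' v c')"
proof (induction u arbitrary: c)
  case Nil
  then show ?case by (simp add: run_Nil_iff)
next
  case (Cons x u)
  obtain a d where x: "x = (a,d)" by (cases x)
  obtain q S where c: "c = (q,S)" by (cases c)
  show ?case using Cons.IH unfolding x c by (simp add: run_Cons_iff) meson
qed

lemma run_sets: "run M c w c' \<Longrightarrow> \<forall>i. snd c' i \<subseteq> snd c i \<union> snd ` set w"
proof (induction rule: run.induct)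
  case (run_nil c)
  then show ?case by simp
next
  case (run_cons q a \<alpha> op q' d S w c')
  show ?case
  proof
    fix i
    have "apply_op op d S i \<subseteq> S i \<union> {d}" by (cases op) auto
    then show "snd c' i \<subseteq> snd (q, S) i \<union> snd ` set ((a, d) # w)"
      using run_cons.IH by fastforce
  qed
qed

lemma run_agree:
  assumes "run M c w c'" "fst c = q" "snd c = T1"
    "\<forall>x\<in>set w. snd x \<notin> V" "\<forall>i. T1 i - V = T2 i - V"
  shows "\<exists>T2'. run M (q,T2) w (fst c', T2')"
  using assms
proof (induction arbitrary: q T1 T2 rule: run.induct)
  case (run_nil c)
  then show ?case by (auto intro: run.intros)
next
  case (run_cons q0 a \<alpha> op q' d S w c')
  have dV: "d \<notin> V" using run_cons.prems by auto
  have sat2: "sat \<alpha> d T2"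
    using run_cons.hyps(2) run_cons.prems dV by (cases \<alpha>) auto
  have agr: "\<forall>i. apply_op op d S i - V = apply_op op d T2 i - V"
    using run_cons.prems dV by (cases op) auto
  obtain T2' where "run M (q', apply_op op d T2) w (fst c', T2')"
    using run_cons.IH[of q' "apply_op op d S" "apply_op op d T2"] run_cons.prems agr by auto
  then show ?case using run_cons.hyps(1) sat2 run_cons.prems
    by (auto intro: run.intros)
qed

lemma det_cond:
  assumes "deterministic M" "wf_safa M" "(q,x,\<alpha>1,op1,q1) \<in> delta M" "(q,x,\<alpha>2,op2,q2) \<in> delta M"
  shows "cond_set \<alpha>1 = cond_set \<alpha>2"
proof -
  have "q \<in> states M" "x \<in> alph M" using assms(2,3) unfolding wf_safa_def by auto
  then obtain i where "\<forall>c op q'. (q, x, c, op, q') \<in> delta M \<longrightarrow> cond_set c = i"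
    using assms(1) unfolding deterministic_def by blast
  then show ?thesis using assms(3,4) by metis
qed

lemma det_same:
  assumes "deterministic M" "wf_safa M" "(q,x,\<alpha>,op1,q1) \<in> delta M" "(q,x,\<alpha>,op2,q2) \<in> delta M"
  shows "op1 = op2 \<and> q1 = q2"
proof -
  have "q \<in> states M" "x \<in> alph M" using assms(2,3) unfolding wf_safa_def by auto
  then obtain i where i: "\<forall>c op q'. (q, x, c, op, q') \<in> delta M \<longrightarrow> cond_set c = i"
    "(\<forall>op1 q1 op2 q2. (q, x, P i, op1, q1) \<in> delta M \<and> (q, x, P i, op2, q2) \<in> delta M
          \<longrightarrow> op1 = op2 \<and> q1 = q2)"
    "(\<forall>op1 q1 op2 q2. (q, x, NP i, op1, q1) \<in> delta M \<and> (q, x, NP i, op2, q2) \<in> delta M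
          \<longrightarrow> op1 = op2 \<and> q1 = q2)"
    using assms(1) unfolding deterministic_def by blast
  have "cond_set \<alpha> = i" using i(1) assms(3) by blast
  then show ?thesis using i(2,3) assms(3,4) by (cases \<alpha>) auto
qed

lemma run_det:
  assumes "deterministic M" "wf_safa M"
  shows "run M c w c1 \<Longrightarrow> run M c w c2 \<Longrightarrow> c1 = c2"
proof (induction arbitrary: c2 rule: run.induct)
  case (run_nil c)
  then show ?case by (simp add: run_Nil_iff)
next
  case (run_cons q a \<alpha> op q' d S w c')
  from run_cons.prems obtain \<beta> op2 q2 where t: "(q,a,\<beta>,op2,q2) \<in> delta M" "sat \<beta> d S"
    "run M (q2, apply_op op2 d S) w c2" by (auto simp: run_Cons_iff)
  have "cond_set \<alpha> = cond_set \<beta>" using det_cond[OF assms run_cons.hyps(1) t(1)] .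
  then have "\<alpha> = \<beta>" using t(2) run_cons.hyps(2) by (cases \<alpha>; cases \<beta>) auto
  then have "op = op2 \<and> q' = q2" using det_same[OF assms run_cons.hyps(1)] t(1) by blast
  then show ?case using run_cons.IH t(3) by blast
qed

definition M0 :: safa where
  "M0 = \<lparr>states = {0..5}, alph = {0}, init = 0, final = {4}, hsets = {0,1},
     delta = {(0,0,NP 0,Ins 0,1),(1,0,NP 1,Ins 1,2),(2,0,P 0,NoOp,3),(2,0,P 1,NoOp,5),
              (3,0,P 0,NoOp,4),(3,0,NP 0,NoOp,4),(5,0,P 0,NoOp,4)}\<rparr>"

lemma wf_M0: "wf_safa M0"
  unfolding wf_safa_def M0_def by auto

definition wd :: "'d \<Rightarrow> 'd \<Rightarrow> 'd \<Rightarrow> 'd \<Rightarrow> (nat \<times> 'd) list" where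
  "wd x y z u = [(0,x),(0,y),(0,z),(0,u)]"

lemma M0_in1:
  fixes a :: 'd
  assumes "a \<noteq> b" "a \<noteq> c" "a \<noteq> e" "b \<noteq> c" "b \<noteq> e" "c \<noteq> e"
  shows "wd a b a e \<in> lang M0"
  unfolding lang_def wd_def
  apply simp
  apply (rule exI[of _ 4], simp add: M0_def)
  apply (rule exI, rule run_cons[where \<alpha>="NP 0" and op="Ins 0" and q'=1], simp, simp)
  apply (rule run_cons[where \<alpha>="NP 1" and op="Ins 1" and q'=2], simp, use assms in simp)
  apply (rule run_cons[where \<alpha>="P 0" and op="NoOp" and q'=3], simp, use assms in simp)
  apply (rule run_cons[where \<alpha>="NP 0" and op="NoOp" and q'=4], simp, use assms in simp)
  apply (rule run_nil)
  done

lemma M0_out1: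
  assumes "a \<noteq> b" "a \<noteq> c" "a \<noteq> e" "b \<noteq> c" "b \<noteq> e" "c \<noteq> e"
  shows "wd a b b e \<notin> lang M0" "wd a b c b \<notin> lang M0" "wd a b c a \<notin> lang M0"
  using assms by (auto simp: lang_def wd_def M0_def run_Cons_iff run_Nil_iff)

lemma M0_in2:
  assumes "a \<noteq> b" "a \<noteq> c" "a \<noteq> e" "b \<noteq> c" "b \<noteq> e" "c \<noteq> e"
  shows "wd a b a b \<in> lang M0"
  unfolding lang_def wd_def
  apply simp
  apply (rule exI[of _ 4], simp add: M0_def)
  apply (rule exI, rule run_cons[where \<alpha>="NP 0" and op="Ins 0" and q'=1], simp, simp)
  apply (rule run_cons[where \<alpha>="NP 1" and op="Ins 1" and q'=2], simp, use assms in simp)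
  apply (rule run_cons[where \<alpha>="P 0" and op="NoOp" and q'=3], simp, use assms in simp)
  apply (rule run_cons[where \<alpha>="NP 0" and op="NoOp" and q'=4], simp, use assms in simp)
  apply (rule run_nil)
  done

lemma M0_in3:
  assumes "a \<noteq> b" "a \<noteq> c" "a \<noteq> e" "b \<noteq> c" "b \<noteq> e" "c \<noteq> e"
  shows "wd a b b a \<in> lang M0"
  unfolding lang_def wd_def
  apply simp
  apply (rule exI[of _ 4], simp add: M0_def)
  apply (rule exI, rule run_cons[where \<alpha>="NP 0" and op="Ins 0" and q'=1], simp, simp)
  apply (rule run_cons[where \<alpha>="NP 1" and op="Ins 1" and q'=2], simp, use assms in simp)
  apply (rule run_cons[where \<alpha>="P 1" and op="NoOp" and q'=5], simp, use assms in simp)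
  apply (rule run_cons[where \<alpha>="P 0" and op="NoOp" and q'=4], simp, use assms in simp)
  apply (rule run_nil)
  done

lemma step_transfer:
  assumes "(q2,z,\<alpha>,op,q') \<in> delta M" "sat \<alpha> y S2" "run M (q', apply_op op x S2) w (qf,Sf)"
    "\<forall>p\<in>set w. snd p \<notin> {x,y}"
  shows "\<exists>Sf'. run M (q2,S2) ((z,y)#w) (qf,Sf')"
proof -
  have "\<forall>i. apply_op op x S2 i - {x,y} = apply_op op y S2 i - {x,y}"
    by (cases op) auto
  then obtain T where "run M (q', apply_op op y S2) w (qf, T)"
    using run_agree[OF assms(3) _ _ assms(4)] by fastforce
  then show ?thesis using assms(1,2) by (auto intro: run.intros)
qed

lemma in_lang:
  assumes "run M (init M, \<lambda>_. {}) u c2" "run M c2 v (qf,Sf)" "qf \<in> final M"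
  shows "u @ v \<in> lang M"
proof -
  have "run M (init M, \<lambda>_. {}) (u@v) (qf,Sf)" using assms run_append by blast
  then show ?thesis using assms(3) unfolding lang_def by blast
qed

lemma from_lang:
  assumes "u @ v \<in> lang M"
  obtains c2 qf Sf where "run M (init M, \<lambda>_. {}) u c2" "run M c2 v (qf,Sf)" "qf \<in> final M"
  using assms unfolding lang_def by (auto simp: run_append)

lemma wd_split: "wd x y z u = [(0,x),(0,y)] @ [(0,z),(0,u)]"
  by (simp add: wd_def)

lemma not_det:
  fixes a :: 'd
  assumes d: "a \<noteq> b" "a \<noteq> c" "a \<noteq> e" "b \<noteq> c" "b \<noteq> e" "c \<noteq> e"
    and M: "wf_safa M" "deterministic M" and L: "(lang M :: (nat \<times> 'd) list set) = lang M0"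
  shows False
proof -
  obtain c2 qf1 Sf1 where r1: "run M (init M, \<lambda>_. {}) [(0,a),(0,b)] c2"
     "run M c2 [(0,a),(0,e)] (qf1,Sf1)" "qf1 \<in> final M"
  proof -
    have "[(0,a),(0,b)] @ [(0,a),(0,e)] \<in> lang M" using M0_in1[OF d] L unfolding wd_split by simp
    then show ?thesis using from_lang that by blast
  qed
  obtain c2' qf2 Sf2 where r2: "run M (init M, \<lambda>_. {}) [(0,a),(0,b)] c2'"
     "run M c2' [(0,a),(0,b)] (qf2,Sf2)" "qf2 \<in> final M"
  proof -
    have "[(0,a),(0,b)] @ [(0,a),(0,b)] \<in> lang M" using M0_in2[OF d] L unfolding wd_split by simp
    then show ?thesis using from_lang that by blast
  qed
  obtain c2'' qf3 Sf3 where r3: "run M (init M, \<lambda>_. {}) [(0,a),(0,b)] c2''"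
     "run M c2'' [(0,b),(0,a)] (qf3,Sf3)" "qf3 \<in> final M"
  proof -
    have "[(0,a),(0,b)] @ [(0,b),(0,a)] \<in> lang M" using M0_in3[OF d] L unfolding wd_split by simp
    then show ?thesis using from_lang that by blast
  qed
  have e2: "c2' = c2" "c2'' = c2" using run_det[OF M(2,1)] r1(1) r2(1) r3(1) by blast+
  obtain q2 S2 where c2: "c2 = (q2,S2)" by (cases c2)
  have S2: "c \<notin> S2 i" for i using run_sets[OF r1(1)] d unfolding c2 by auto
  obtain \<alpha>1 op1 q1 where t1: "(q2,0,\<alpha>1,op1,q1) \<in> delta M" "sat \<alpha>1 a S2"
     "run M (q1, apply_op op1 a S2) [(0,e)] (qf1,Sf1)"
    using r1(2) unfolding c2 run_Cons_iff[of M q2 S2] by blast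
  obtain \<alpha>2 op2 q2' where t2: "(q2,0,\<alpha>2,op2,q2') \<in> delta M" "sat \<alpha>2 a S2"
     "run M (q2', apply_op op2 a S2) [(0,b)] (qf2,Sf2)"
    using r2(2) unfolding e2 c2 run_Cons_iff[of M q2 S2] by blast
  obtain \<alpha>3 op3 q3 where t3: "(q2,0,\<alpha>3,op3,q3) \<in> delta M" "sat \<alpha>3 b S2"
     "run M (q3, apply_op op3 b S2) [(0,a)] (qf3,Sf3)"
    using r3(2) unfolding e2 c2 run_Cons_iff[of M q2 S2] by blast
  have c12: "cond_set \<alpha>1 = cond_set \<alpha>2" "cond_set \<alpha>1 = cond_set \<alpha>3"
    using det_cond[OF M(2,1)] t1(1) t2(1) t3(1) by blast+
  have "\<alpha>1 = \<alpha>2" using c12 t1(2) t2(2) by (cases \<alpha>1; cases \<alpha>2) auto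
  then have o12: "op1 = op2" "q1 = q2'" using det_same[OF M(2,1)] t1(1) t2(1) by blast+
  show False
  proof (cases \<alpha>2)
    case (NP i)
    have "sat \<alpha>2 c S2" using S2 NP by simp
    then obtain Sf' where "run M (q2,S2) ((0,c)#[(0,b)]) (qf2,Sf')"
      using step_transfer[OF t2(1) _ t2(3)] d by auto
    then have "wd a b c b \<in> lang M"
      using in_lang[OF r1(1)[unfolded c2]] r2(3) wd_split by (metis append_Cons append_Nil)
    then show False using M0_out1[OF d] L by simp
  next
    case (P i)
    note a2 = P
    show False
    proof (cases \<alpha>3)
      case (NP j)
      have "sat \<alpha>3 c S2" using S2 NP by simp
      then obtain Sf' where "run M (q2,S2) ((0,c)#[(0,a)]) (qf3,Sf')"
        using step_transfer[OF t3(1) _ t3(3)] d by auto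
      then have "wd a b c a \<in> lang M"
        using in_lang[OF r1(1)[unfolded c2]] r3(3) wd_split by (metis append_Cons append_Nil)
      then show False using M0_out1[OF d] L by simp
    next
      case (P j)
      then have "\<alpha>3 = \<alpha>1" using c12 \<open>\<alpha>1 = \<alpha>2\<close> a2 by simp
      then have o13: "op3 = op1" "q3 = q1" using det_same[OF M(2,1)] t1(1) t3(1) by blast+
      obtain Sf' where "run M (q2,S2) ((0,b)#[(0,e)]) (qf1,Sf')"
        using step_transfer[OF t3(1) t3(2) t1(3)[folded o13]] d by auto
      then have "wd a b b e \<in> lang M"
        using in_lang[OF r1(1)[unfolded c2]] r1(3) wd_split by (metis append_Cons append_Nil)
      then show False using M0_out1[OF d] L by simp
    qed
  qed
qed

lemma fresh_ex:
  assumes "infinite (UNIV :: 'd set)" "finite (F :: 'd set)"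
  shows "\<exists>x. x \<notin> F"
proof (rule ccontr)
  assume "\<not> (\<exists>x. x \<notin> F)"
  then have "F = UNIV" by blast
  then show False using assms by simp
qed

theorem theorem13:
  assumes "infinite (UNIV :: 'd::countable set)"
  shows "(L_DSAFA :: (nat \<times> 'd) list set set) \<subset> L_SAFA"
proof -
  obtain a :: 'd where True by simp
  obtain b :: 'd where b: "b \<notin> {a}" using fresh_ex[OF assms, of "{a}"] by blast
  obtain c :: 'd where c: "c \<notin> {a,b}" using fresh_ex[OF assms, of "{a,b}"] by blast
  obtain e :: 'd where e: "e \<notin> {a,b,c}" using fresh_ex[OF assms, of "{a,b,c}"] by blast
  have d: "a \<noteq> b" "a \<noteq> c" "a \<noteq> e" "b \<noteq> c" "b \<noteq> e" "c \<noteq> e"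
    using b c e by auto
  have sub: "(L_DSAFA :: (nat \<times> 'd) list set set) \<subseteq> L_SAFA"
    unfolding L_DSAFA_def L_SAFA_def by blast
  have in1: "(lang M0 :: (nat \<times> 'd) list set) \<in> L_SAFA"
    unfolding L_SAFA_def using wf_M0 by blast
  have "(lang M0 :: (nat \<times> 'd) list set) \<notin> L_DSAFA"
  proof
    assume "(lang M0 :: (nat \<times> 'd) list set) \<in> L_DSAFA"
    then obtain M where M: "wf_safa M" "deterministic M" "(lang M :: (nat \<times> 'd) list set) = lang M0"
      unfolding L_DSAFA_def by auto
    show False using not_det[OF d M] .
  qed
  then show ?thesis using sub in1 by blast
qed

end
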